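(* Let $p>5$ be a prime, $q=p^h$, and let $\mathcal{F}$ be the projective closure of $ax^ny^m+bx^n+cy^m=1$ over $\mathbb{F}_q$, where $a,b,c\in\mathbb{F}_q^*$, $c\ne-\frac ab$. Suppose $n=m=\frac{q-1}{p^r-1}$ with $r<h$, $r\mid h$, and $a,b,c\in\mathbb{F}_{p^r}$. Then $N_q(\mathcal{F})=n^2(p^r-3)+4n$.
   Context: $N_q(\mathcal{F})$ denotes the number of $\mathbb{F}_q$-rational points of $\mathcal{F}$ counted on its nonsingular model, i.e. singular points contribute their number of $\mathbb{F}_q$-rational branches (equivalently, the number of degree-one places of $\mathbb{F}_q(\mathcal{F})$). *)

theory Defs
  imports "HOL-Computational_Algebra.Formal_Power_Series"
begin

text \<open>Branches of a projective plane curve G(X,Y,Z) = 0 over a field K, via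
  formal power series (classical branch representations, as in
  Hirschfeld--Korchmaros--Torres).\<close>

type_synonym 'a triple = "'a fps \<times> 'a fps \<times> 'a fps"

definition scale_reparam :: "'a::field fps \<Rightarrow> 'a fps \<Rightarrow> 'a triple \<Rightarrow> 'a triple" where
  "scale_reparam \<rho> \<sigma> r = (case r of (X, Y, Z) \<Rightarrow>
      (\<rho> * (X oo \<sigma>), \<rho> * (Y oo \<sigma>), \<rho> * (Z oo \<sigma>)))"

definition normalised_triple :: "'a::field triple \<Rightarrow> bool" where
  "normalised_triple r = (case r of (X, Y, Z) \<Rightarrow> fps_nth X 0 \<noteq> 0 \<or> fps_nth Y 0 \<noteq> 0 \<or> fps_nth Z 0 \<noteq> 0)"

definition constant_point :: "'a::field triple \<Rightarrow> bool" where
  "constant_point r = (case r of (X, Y, Z) \<Rightarrow>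
      (\<exists>\<rho> u v w. fps_nth \<rho> 0 \<noteq> 0 \<and> X = \<rho> * fps_const u \<and> Y = \<rho> * fps_const v \<and> Z = \<rho> * fps_const w))"

definition branch_rep :: "('a::field fps \<Rightarrow> 'a fps \<Rightarrow> 'a fps \<Rightarrow> 'a fps) \<Rightarrow> 'a triple \<Rightarrow> bool" where
  "branch_rep G r = (normalised_triple r \<and> \<not> constant_point r \<and>
      (case r of (X, Y, Z) \<Rightarrow> G X Y Z = 0))"

definition primitive_rep :: "'a::field triple \<Rightarrow> bool" where
  "primitive_rep r = (\<not> (\<exists>s \<rho> \<sigma>. fps_nth \<rho> 0 \<noteq> 0 \<and> fps_nth \<sigma> 0 = 0 \<and> fps_nth \<sigma> 1 = 0 \<and> r = scale_reparam \<rho> \<sigma> s))"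

definition rep_equiv :: "'a::field triple \<Rightarrow> 'a triple \<Rightarrow> bool" where
  "rep_equiv r r' = (\<exists>\<rho> \<sigma>. fps_nth \<rho> 0 \<noteq> 0 \<and> fps_nth \<sigma> 0 = 0 \<and> fps_nth \<sigma> 1 \<noteq> 0 \<and> r' = scale_reparam \<rho> \<sigma> r)"

definition rational_branches :: "('a::field fps \<Rightarrow> 'a fps \<Rightarrow> 'a fps \<Rightarrow> 'a fps) \<Rightarrow> 'a triple set set" where
  "rational_branches G =
     (let B = {r. branch_rep G r \<and> primitive_rep r}
      in (\<lambda>r. {r' \<in> B. rep_equiv r r'}) ` B)"

text \<open>N_q of the curve: number of K-rational branches = number of points of the
  nonsingular model over K (K = F_q, the finite base field).\<close>
definition Nq :: "('a::{finite,field} fps \<Rightarrow> 'a fps \<Rightarrow> 'a fps \<Rightarrow> 'a fps) \<Rightarrow> nat" where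
  "Nq G = card (rational_branches G)"

definition curve_F :: "'a::field \<Rightarrow> 'a \<Rightarrow> 'a \<Rightarrow> nat \<Rightarrow> nat \<Rightarrow> 'a fps \<Rightarrow> 'a fps \<Rightarrow> 'a fps \<Rightarrow> 'a fps" where
  "curve_F a b c n m X Y Z =
     fps_const a * X ^ n * Y ^ m + fps_const b * X ^ n * Z ^ m + fps_const c * Y ^ m * Z ^ n - Z ^ (n + m)"

end

theory Submission
  imports Defs "HOL-Number_Theory.Residues" "HOL-Computational_Algebra.Polynomial"
begin
unbundle fps_syntax

lemma power_radical_gen:
  fixes a:: "'a::field fps"
  assumes a0: "a$0 \<noteq> 0" and ch: "of_nat (Suc k) \<noteq> (0::'a)"
  assumes r0: "(r (Suc k) (a$0)) ^ Suc k = a$0"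
  shows "(fps_radical r (Suc k) a) ^ (Suc k) = a"
proof -
  let ?r = "fps_radical r (Suc k) a"
    from a0 r0 have r00: "r (Suc k) (a$0) \<noteq> 0" by auto
    have "?r ^ Suc k $ z = a$z" for z
    proof (induct z rule: nat_less_induct)
      fix n
      assume H: "\<forall>m<n. ?r ^ Suc k $ m = a$m"
      show "?r ^ Suc k $ n = a $n"
      proof (cases n)
        case 0
        then show ?thesis
          using fps_radical_power_nth[of r "Suc k" a, OF r0] by simp
      next
        case (Suc n1)
        then have "n \<noteq> 0" by simp
        let ?Pnk = "natpermute n (k + 1)"
        let ?Pnkn = "{xs \<in> ?Pnk. n \<in> set xs}"
        let ?Pnknn = "{xs \<in> ?Pnk. n \<notin> set xs}"
        have eq: "?Pnkn \<union> ?Pnknn = ?Pnk" by blast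
        have d: "?Pnkn \<inter> ?Pnknn = {}" by blast
        have f: "finite ?Pnkn" "finite ?Pnknn"
          using finite_Un[of ?Pnkn ?Pnknn, unfolded eq]
          by (metis natpermute_finite)+
        let ?f = "\<lambda>v. \<Prod>j\<in>{0..k}. ?r $ v ! j"
        have "sum ?f ?Pnkn = sum (\<lambda>v. ?r $ n * r (Suc k) (a $ 0) ^ k) ?Pnkn"
        proof (rule sum.cong)
          fix v assume v: "v \<in> {xs \<in> natpermute n (k + 1). n \<in> set xs}"
          let ?ths = "(\<Prod>j\<in>{0..k}. fps_radical r (Suc k) a $ v ! j) =
            fps_radical r (Suc k) a $ n * r (Suc k) (a $ 0) ^ k"
          from v obtain i where i: "i \<in> {0..k}" "v = (replicate (k+1) 0) [i:= n]"
            unfolding natpermute_contain_maximal by auto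
          have "(\<Prod>j\<in>{0..k}. fps_radical r (Suc k) a $ v ! j) =
                (\<Prod>j\<in>{0..k}. if j = i then fps_radical r (Suc k) a $ n else r (Suc k) (a$0))"
              using i r0 by (auto simp del: replicate.simps intro: prod.cong)
          also have "\<dots> = (fps_radical r (Suc k) a $ n) * r (Suc k) (a$0) ^ k"
            using i r0 by (simp add: prod_gen_delta)
          finally show ?ths .
        qed rule
        then have "sum ?f ?Pnkn = of_nat (k+1) * ?r $ n * r (Suc k) (a $ 0) ^ k"
          by (simp add: natpermute_max_card[OF \<open>n \<noteq> 0\<close>, simplified])
        also have "\<dots> = a$n - sum ?f ?Pnknn"
          unfolding Suc using r00 a0 ch by (simp add: field_simps fps_radical_def del: of_nat_Suc)
        finally have fn: "sum ?f ?Pnkn = a$n - sum ?f ?Pnknn" .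
        have "(?r ^ Suc k)$n = sum ?f ?Pnkn + sum ?f ?Pnknn"
          unfolding fps_power_nth_Suc sum.union_disjoint[OF f d, unfolded eq] ..
        also have "\<dots> = a$n" unfolding fn by simp
        finally show ?thesis .
      qed
    qed
    then show ?thesis using r0 by (simp add: fps_eq_iff)
qed

lemma fps_root_unique:
  fixes u v :: "'a::field fps"
  assumes "u ^ N = v ^ N" "u $ 0 = v $ 0" "v $ 0 \<noteq> 0" "of_nat N \<noteq> (0::'a)"
  shows "u = v"
proof -
  have "u ^ N - v ^ N = (u - v) * (\<Sum>i<N. v ^ (N - Suc i) * u ^ i)"
    by (rule power_diff_sumr2)
  hence z: "(u - v) * (\<Sum>i<N. v ^ (N - Suc i) * u ^ i) = 0" using assms(1) by simp
  have "(\<Sum>i<N. v ^ (N - Suc i) * u ^ i) $ 0 = (\<Sum>i<N. (v$0) ^ (N - Suc i) * (u$0) ^ i)"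
    by (simp add: fps_sum_nth fps_nth_power_0)
  also have "\<dots> = (\<Sum>i<N. (v$0) ^ (N - 1))"
    using assms(2) by (intro sum.cong) (auto simp flip: power_add)
  also have "\<dots> = of_nat N * (v$0) ^ (N - 1)" by simp
  finally have "(\<Sum>i<N. v ^ (N - Suc i) * u ^ i) \<noteq> 0"
    using assms(3,4) by (metis fps_nonzero_nth mult_eq_0_iff power_eq_0_iff)
  with z show ?thesis by simp
qed

definition froot :: "nat \<Rightarrow> 'a::field fps \<Rightarrow> 'a \<Rightarrow> 'a fps" where
  "froot N W w0 = fps_const w0 * fps_radical (\<lambda>_ _. 1) N (W * fps_const (inverse (w0 ^ N)))"

lemma froot:
  fixes W :: "'a::field fps"
  assumes "W $ 0 = w0 ^ N" "w0 \<noteq> 0" "of_nat N \<noteq> (0::'a)"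
  shows "froot N W w0 ^ N = W" "froot N W w0 $ 0 = w0"
proof -
  have N: "N > 0" using assms(3) by (cases N) auto
  then obtain k where k: "N = Suc k" by (cases N) auto
  let ?A = "W * fps_const (inverse (w0 ^ N))"
  have A0: "?A $ 0 = 1" using assms by simp
  have "fps_radical (\<lambda>_ _. 1) (Suc k) ?A ^ Suc k = ?A"
    by (rule power_radical_gen) (use A0 assms(3) k in auto)
  hence "froot N W w0 ^ N = fps_const (w0 ^ N) * ?A"
    unfolding froot_def k power_mult_distrib fps_const_power by simp
  also have "\<dots> = W" using assms(2)
  proof -
    have "fps_const (w0 ^ N) * fps_const (inverse (w0 ^ N)) = (1::'a fps)"
      unfolding fps_const_mult[symmetric] using assms(2) by simp
    thus ?thesis by (metis mult.commute mult.left_commute mult_1_right)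
  qed
  finally show "froot N W w0 ^ N = W" .
  show "froot N W w0 $ 0 = w0" using N by (simp add: froot_def)
qed


lemma scale_comp:
  fixes \<rho>1 \<rho>2 \<sigma>1 \<sigma>2 :: "'a::field fps"
  assumes "\<sigma>1 $ 0 = 0" "\<sigma>2 $ 0 = 0"
  shows "scale_reparam \<rho>2 \<sigma>2 (scale_reparam \<rho>1 \<sigma>1 s) = scale_reparam (\<rho>2 * (\<rho>1 oo \<sigma>2)) (\<sigma>1 oo \<sigma>2) s"
  using assms
  by (cases s) (simp add: scale_reparam_def fps_compose_mult_distrib fps_compose_assoc mult.assoc)

lemma scale_id: "scale_reparam 1 fps_X s = (s :: 'a::field triple)"
  by (cases s) (simp add: scale_reparam_def)

lemma compose_nth1:
  fixes F \<sigma> :: "'a::field fps"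
  assumes "\<sigma> $ 0 = 0"
  shows "(F oo \<sigma>) $ 1 = F $ 1 * \<sigma> $ 1"
  using assms by (simp add: fps_compose_nth numeral_2_eq_2)

lemma prim_aux:
  fixes \<rho> \<sigma> A B P :: "'a::field fps"
  assumes "\<rho> * (A oo \<sigma>) = 1" "\<rho> * (B oo \<sigma>) = P" "\<sigma> $ 0 = 0" "\<sigma> $ 1 = 0"
  shows "P $ 1 = 0"
proof -
  have "P * (A oo \<sigma>) = (\<rho> * (A oo \<sigma>)) * (B oo \<sigma>)" using assms(2) by (simp add: mult_ac)
  hence e: "P * (A oo \<sigma>) = B oo \<sigma>" using assms(1) by simp
  have "(B oo \<sigma>) $ 1 = 0" using compose_nth1[OF assms(3)] assms(4) by simp
  hence "(P * (A oo \<sigma>)) $ 1 = 0" using e by simp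
  hence "P $ 0 * (A oo \<sigma>) $ 1 + P $ 1 * A $ 0 = 0" by (simp add: fps_mult_nth_1)
  moreover have "(A oo \<sigma>) $ 1 = 0" using compose_nth1[OF assms(3)] assms(4) by simp
  moreover have "A $ 0 \<noteq> 0"
  proof
    assume "A $ 0 = 0"
    hence "(\<rho> * (A oo \<sigma>)) $ 0 = 0" by simp
    with assms(1) show False by simp
  qed
  ultimately show ?thesis by simp
qed

lemma label_lemma:
  fixes X Z T :: "'a::field fps"
  assumes "X = Z * T" "Z \<noteq> 0"
  shows "X $ subdegree Z / Z $ subdegree Z = T $ 0"
  using assms by simp

lemma scale_zero_const:
  fixes \<rho> :: "'a::field fps"
  assumes "\<rho> $ 0 \<noteq> 0"
  shows "constant_point (scale_reparam \<rho> 0 s)"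
  using assms by (cases s) (auto simp: scale_reparam_def constant_point_def)

definition sw :: "'a triple \<Rightarrow> 'a triple" where
  "sw r = (case r of (X, Y, Z) \<Rightarrow> (Y, X, Z))"

lemma sw_sw [simp]: "sw (sw r) = r"
  by (cases r) (simp add: sw_def)

lemma sw_scale: "scale_reparam \<rho> \<sigma> (sw s) = sw (scale_reparam \<rho> \<sigma> s)"
  by (cases s) (simp add: sw_def scale_reparam_def)

lemma curve_sw: "curve_F a b c N N Y X Z = curve_F a c b N N X Y Z"
  unfolding curve_F_def by (simp add: algebra_simps)

lemma branch_rep_sw:
  "branch_rep (curve_F a b c N N) (sw r) = branch_rep (curve_F a c b N N) r"
  by (cases r) (auto simp: branch_rep_def sw_def normalised_triple_def constant_point_def curve_sw)

lemma primitive_rep_sw: "primitive_rep (sw r) = primitive_rep r"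
proof -
  have "(sw r = scale_reparam \<rho> \<sigma> s) = (r = scale_reparam \<rho> \<sigma> (sw s))" for \<rho> \<sigma> s
    by (metis sw_scale sw_sw)
  thus ?thesis unfolding primitive_rep_def by (metis sw_sw)
qed


definition onC :: "'a::field \<Rightarrow> 'a \<Rightarrow> 'a \<Rightarrow> nat \<Rightarrow> 'a \<Rightarrow> 'a \<Rightarrow> bool" where
  "onC a b c N x y \<longleftrightarrow> a * x ^ N * y ^ N + b * x ^ N + c * y ^ N = 1"

definition WA :: "'a::field \<Rightarrow> 'a \<Rightarrow> 'a \<Rightarrow> nat \<Rightarrow> 'a \<Rightarrow> 'a fps" where
  "WA a b c N x0 = (1 - fps_const b * (fps_const x0 + fps_X) ^ N) *
      inverse (fps_const a * (fps_const x0 + fps_X) ^ N + fps_const c)"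

definition stdA :: "'a::field \<Rightarrow> 'a \<Rightarrow> 'a \<Rightarrow> nat \<Rightarrow> 'a \<Rightarrow> 'a \<Rightarrow> 'a triple" where
  "stdA a b c N x0 y0 = (fps_const x0 + fps_X, froot N (WA a b c N x0) y0, 1)"

definition WB :: "'a::field \<Rightarrow> 'a \<Rightarrow> 'a \<Rightarrow> nat \<Rightarrow> 'a fps" where
  "WB a b c N = (fps_X ^ N - fps_const c) * inverse (fps_const a + fps_const b * fps_X ^ N)"

definition stdB :: "'a::field \<Rightarrow> 'a \<Rightarrow> 'a \<Rightarrow> nat \<Rightarrow> 'a \<Rightarrow> 'a triple" where
  "stdB a b c N l = (fps_X * froot N (WB a b c N) l, 1, fps_X)"

lemma denomA:
  fixes a b c x0 y0 :: "'a::field"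
  assumes "onC a b c N x0 y0" "a + b * c \<noteq> 0"
  shows "a * x0 ^ N + c \<noteq> 0"
proof
  assume h: "a * x0 ^ N + c = 0"
  have "b * x0 ^ N = 1 - (a * x0 ^ N + c) * y0 ^ N" using assms(1) unfolding onC_def
    by (simp add: algebra_simps)
  hence "b * x0 ^ N = 1" using h by simp
  hence "b * (a * x0 ^ N) = a" by (metis mult.left_commute mult_1_right)
  hence "b * (- c) = a" using h by (metis add_eq_0_iff2 neg_equal_iff_equal)
  with assms(2) show False by (metis ab_left_minus add.commute mult_minus_right)
qed

lemma WA0:
  fixes a b c x0 y0 :: "'a::field"
  assumes "onC a b c N x0 y0" "a + b * c \<noteq> 0"
  shows "WA a b c N x0 $ 0 = y0 ^ N"
proof -
  have d: "a * x0 ^ N + c \<noteq> 0" by (rule denomA[OF assms])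
  have "y0 ^ N * (a * x0 ^ N + c) = 1 - b * x0 ^ N" using assms(1) unfolding onC_def
    by (simp add: algebra_simps)
  hence "y0 ^ N = (1 - b * x0 ^ N) / (a * x0 ^ N + c)" using d by (simp add: field_simps)
  thus ?thesis by (simp add: WA_def fps_nth_power_0 divide_inverse)
qed

lemma compose_poly_aux:
  fixes u \<sigma> :: "'a::field fps"
  assumes "\<sigma> $ 0 = 0"
  shows "(fps_const a * u ^ N + fps_const c) oo \<sigma> = fps_const a * (u oo \<sigma>) ^ N + fps_const c"
    "(1 - fps_const b * u ^ N) oo \<sigma> = 1 - fps_const b * (u oo \<sigma>) ^ N"
proof -
  have p: "u ^ N oo \<sigma> = (u oo \<sigma>) ^ N" using fps_compose_power[OF assms] by simp
  show "(fps_const a * u ^ N + fps_const c) oo \<sigma> = fps_const a * (u oo \<sigma>) ^ N + fps_const c"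
    unfolding fps_compose_add_distrib fps_const_mult_apply_left[symmetric] p by simp
  show "(1 - fps_const b * u ^ N) oo \<sigma> = 1 - fps_const b * (u oo \<sigma>) ^ N"
    unfolding fps_compose_sub_distrib fps_const_mult_apply_left[symmetric] p by simp
qed

lemma stdA_props:
  fixes a b c x0 y0 :: "'a::field"
  assumes "onC a b c N x0 y0" "a + b * c \<noteq> 0" "y0 \<noteq> 0" "of_nat N \<noteq> (0::'a)"
  shows "froot N (WA a b c N x0) y0 ^ N = WA a b c N x0" "froot N (WA a b c N x0) y0 $ 0 = y0"
  using froot[OF WA0[OF assms(1,2)] assms(3,4)] by auto

lemma caseA:
  fixes a b c :: "'a::field" and x y :: "'a fps"
  assumes eq: "fps_const a * x ^ N * y ^ N + fps_const b * x ^ N + fps_const c * y ^ N = 1"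
    and y0: "y $ 0 \<noteq> 0" and abc: "a + b * c \<noteq> 0" and N: "of_nat N \<noteq> (0::'a)"
  shows "onC a b c N (x $ 0) (y $ 0)"
    "(x - fps_const (x $ 0)) $ 0 = 0"
    "y = froot N (WA a b c N (x $ 0)) (y $ 0) oo (x - fps_const (x $ 0))"
proof -
  have "(fps_const a * x ^ N * y ^ N + fps_const b * x ^ N + fps_const c * y ^ N) $ 0 = 1"
    using eq by simp
  thus on: "onC a b c N (x $ 0) (y $ 0)" unfolding onC_def by (simp add: fps_nth_power_0)
  define \<sigma> where "\<sigma> = x - fps_const (x $ 0)"
  show s0: "(x - fps_const (x $ 0)) $ 0 = 0" by simp
  hence s0': "\<sigma> $ 0 = 0" by (simp add: \<sigma>_def)
  have u\<sigma>: "(fps_const (x $ 0) + fps_X) oo \<sigma> = x"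
    using s0' by (simp add: fps_compose_add_distrib \<sigma>_def)
  define D where "D = fps_const a * x ^ N + fps_const c"
  have D0: "D $ 0 \<noteq> 0" using denomA[OF on abc] by (simp add: D_def fps_nth_power_0)
  have "y ^ N * D = 1 - fps_const b * x ^ N" using eq by (simp add: D_def algebra_simps)
  hence "y ^ N * D * inverse D = (1 - fps_const b * x ^ N) * inverse D" by simp
  hence yN: "y ^ N = (1 - fps_const b * x ^ N) * inverse D"
    using inverse_mult_eq_1'[OF D0] by (simp add: mult.assoc)
  have U0: "(fps_const a * (fps_const (x $ 0) + fps_X) ^ N + fps_const c) $ 0 \<noteq> 0"
    using denomA[OF on abc] by (simp add: fps_nth_power_0)
  have WAs: "WA a b c N (x $ 0) oo \<sigma> = (1 - fps_const b * x ^ N) * inverse D"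
    unfolding WA_def fps_compose_mult_distrib[OF s0'] fps_inverse_compose[OF s0' U0]
      compose_poly_aux[OF s0'] u\<sigma> D_def ..
  let ?R = "froot N (WA a b c N (x $ 0)) (y $ 0)"
  have "(?R oo \<sigma>) ^ N = ?R ^ N oo \<sigma>" by (rule fps_compose_power[OF s0'])
  also have "\<dots> = y ^ N" using stdA_props[OF on abc y0 N] WAs yN by simp
  finally have "(?R oo \<sigma>) ^ N = y ^ N" .
  moreover have "(?R oo \<sigma>) $ 0 = y $ 0" using stdA_props[OF on abc y0 N] by simp
  ultimately have "?R oo \<sigma> = y" using fps_root_unique y0 N by blast
  thus "y = ?R oo (x - fps_const (x $ 0))" by (simp add: \<sigma>_def)
qed


lemma nonconst_aux:
  fixes \<rho> P :: "'a::field fps"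
  assumes "P = \<rho> * fps_const p" "1 = \<rho> * fps_const q" "P $ 1 \<noteq> 0"
  shows False
proof -
  have "P * fps_const q = (\<rho> * fps_const q) * fps_const p" using assms(1) by (simp add: mult_ac)
  hence "P * fps_const q = fps_const p" using assms(2) by simp
  hence "(P * fps_const q) $ 1 = 0" by simp
  hence "P $ 1 * q = 0" by simp
  moreover have "q \<noteq> 0" using assms(2) by (metis fps_const_0_eq_0 mult_zero_right zero_neq_one)
  ultimately show False using assms(3) by simp
qed

lemma prim_from:
  fixes P :: "'a::field fps"
  assumes "\<And>\<rho> \<sigma> s. r = scale_reparam \<rho> \<sigma> s \<Longrightarrow> \<exists>A B. \<rho> * (A oo \<sigma>) = 1 \<and> \<rho> * (B oo \<sigma>) = P"
    and "P $ 1 \<noteq> 0"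
  shows "primitive_rep r"
  unfolding primitive_rep_def
proof
  assume "\<exists>s \<rho> \<sigma>. \<rho> $ 0 \<noteq> 0 \<and> \<sigma> $ 0 = 0 \<and> \<sigma> $ 1 = 0 \<and> r = scale_reparam \<rho> \<sigma> s"
  then obtain s \<rho> \<sigma> where h: "\<sigma> $ 0 = 0" "\<sigma> $ 1 = 0" "r = scale_reparam \<rho> \<sigma> s" by blast
  from assms(1)[OF h(3)] obtain A B where "\<rho> * (A oo \<sigma>) = 1" "\<rho> * (B oo \<sigma>) = P" by blast
  from prim_aux[OF this h(1,2)] assms(2) show False by simp
qed

lemma stdA_branch:
  fixes a b c x0 y0 :: "'a::field"
  assumes on: "onC a b c N x0 y0" and abc: "a + b * c \<noteq> 0" and y0: "y0 \<noteq> 0"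
    and N: "of_nat N \<noteq> (0::'a)"
  shows "branch_rep (curve_F a b c N N) (stdA a b c N x0 y0)"
    "primitive_rep (stdA a b c N x0 y0)"
proof -
  let ?u = "fps_const x0 + fps_X :: 'a fps"
  let ?\<Phi> = "froot N (WA a b c N x0) y0"
  define D where "D = fps_const a * ?u ^ N + fps_const c"
  have D0: "D $ 0 \<noteq> 0" using denomA[OF on abc] by (simp add: D_def fps_nth_power_0)
  have PN: "?\<Phi> ^ N = (1 - fps_const b * ?u ^ N) * inverse D"
    using stdA_props(1)[OF on abc y0 N] by (simp add: WA_def D_def)
  have "fps_const a * ?u ^ N * ?\<Phi> ^ N + fps_const c * ?\<Phi> ^ N = ?\<Phi> ^ N * D"
    by (simp add: D_def algebra_simps)
  also have "\<dots> = (1 - fps_const b * ?u ^ N) * (inverse D * D)" unfolding PN by (simp add: mult_ac)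
  also have "\<dots> = 1 - fps_const b * ?u ^ N" using inverse_mult_eq_1[OF D0] by simp
  finally have key: "fps_const a * ?u ^ N * ?\<Phi> ^ N + fps_const c * ?\<Phi> ^ N = 1 - fps_const b * ?u ^ N" .
  have cF: "curve_F a b c N N ?u ?\<Phi> 1 = 0"
    unfolding curve_F_def using key by (simp add: algebra_simps)
  have nc: "\<not> constant_point (stdA a b c N x0 y0)"
  proof
    assume "constant_point (stdA a b c N x0 y0)"
    then obtain \<rho> p w where "?u = \<rho> * fps_const p" "1 = \<rho> * fps_const w"
      unfolding constant_point_def stdA_def by auto
    from nonconst_aux[OF this] show False by simp
  qed
  show "branch_rep (curve_F a b c N N) (stdA a b c N x0 y0)"
    unfolding branch_rep_def using nc cF by (simp add: stdA_def normalised_triple_def)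
  show "primitive_rep (stdA a b c N x0 y0)"
  proof (rule prim_from[where P = ?u])
    fix \<rho> \<sigma> s assume "stdA a b c N x0 y0 = scale_reparam \<rho> \<sigma> s"
    then show "\<exists>A B. \<rho> * (A oo \<sigma>) = 1 \<and> \<rho> * (B oo \<sigma>) = ?u"
      by (cases s) (auto simp: stdA_def scale_reparam_def)
  qed simp
qed

lemma stdB_props:
  fixes a b c l :: "'a::field"
  assumes "a * l ^ N + c = 0" "a \<noteq> 0" "c \<noteq> 0" "of_nat N \<noteq> (0::'a)"
  shows "froot N (WB a b c N) l ^ N = WB a b c N" "froot N (WB a b c N) l $ 0 = l"
proof -
  have N: "N > 0" using assms(4) by (cases N) auto
  have l: "l \<noteq> 0" using assms N by (auto simp: power_0_left)
  have "l ^ N = - c / a" using assms(1,2) by (simp add: field_simps add_eq_0_iff2)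
  hence "WB a b c N $ 0 = l ^ N" using N by (simp add: WB_def fps_nth_power_0 divide_inverse power_0_left)
  from froot[OF this l assms(4)] show "froot N (WB a b c N) l ^ N = WB a b c N"
    "froot N (WB a b c N) l $ 0 = l" by auto
qed

lemma stdB_branch:
  fixes a b c l :: "'a::field"
  assumes "a * l ^ N + c = 0" "a \<noteq> 0" "c \<noteq> 0" and N: "of_nat N \<noteq> (0::'a)"
  shows "branch_rep (curve_F a b c N N) (stdB a b c N l)"
    "primitive_rep (stdB a b c N l)"
proof -
  let ?\<Psi> = "froot N (WB a b c N) l"
  define D where "D = (fps_const a + fps_const b * fps_X ^ N :: 'a fps)"
  have D0: "D $ 0 \<noteq> 0" using assms N by (cases N) (auto simp: D_def)
  have PN: "?\<Psi> ^ N = (fps_X ^ N - fps_const c) * inverse D"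
    using stdB_props(1)[OF assms] by (simp add: WB_def D_def)
  have "?\<Psi> ^ N * D = (fps_X ^ N - fps_const c) * (inverse D * D)" unfolding PN by (simp add: mult_ac)
  also have "\<dots> = fps_X ^ N - fps_const c" using inverse_mult_eq_1[OF D0] by simp
  finally have key: "?\<Psi> ^ N * D = fps_X ^ N - fps_const c" .
  have "curve_F a b c N N (fps_X * ?\<Psi>) 1 fps_X = fps_X ^ N * (?\<Psi> ^ N * D - (fps_X ^ N - fps_const c))"
    unfolding curve_F_def D_def by (simp add: algebra_simps power_mult_distrib power_add)
  hence cF: "curve_F a b c N N (fps_X * ?\<Psi>) 1 fps_X = 0" using key by simp
  have nc: "\<not> constant_point (stdB a b c N l)"
  proof
    assume "constant_point (stdB a b c N l)"
    then obtain \<rho> :: "'a fps" and q w where "fps_X = \<rho> * fps_const w" "1 = \<rho> * fps_const q"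
      unfolding constant_point_def stdB_def by auto
    from nonconst_aux[OF this] show False by simp
  qed
  show "branch_rep (curve_F a b c N N) (stdB a b c N l)"
    unfolding branch_rep_def using nc cF by (simp add: stdB_def normalised_triple_def)
  show "primitive_rep (stdB a b c N l)"
  proof (rule prim_from[where P = fps_X])
    fix \<rho> \<sigma> s assume "stdB a b c N l = scale_reparam \<rho> \<sigma> s"
    then show "\<exists>A B. \<rho> * (A oo \<sigma>) = 1 \<and> \<rho> * (B oo \<sigma>) = fps_X"
      by (cases s) (auto simp: stdB_def scale_reparam_def intro: sym)
  qed simp
qed


lemma caseB:
  fixes a b c :: "'a::field" and X Y Z :: "'a fps"
  assumes cF: "curve_F a b c N N X Y Z = 0" and Y0: "Y $ 0 \<noteq> 0" and Z0: "Z $ 0 = 0"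
    and nc: "\<not> constant_point (X, Y, Z)"
    and a: "a \<noteq> 0" and c: "c \<noteq> 0" and N: "of_nat N \<noteq> (0::'a)"
  shows "a * (X $ subdegree Z / Z $ subdegree Z) ^ N + c = 0"
    "\<exists>\<rho> \<sigma>. \<rho> $ 0 \<noteq> 0 \<and> \<sigma> $ 0 = 0 \<and>
        (X, Y, Z) = scale_reparam \<rho> \<sigma> (stdB a b c N (X $ subdegree Z / Z $ subdegree Z))"
proof -
  have Npos: "N > 0" using N by (cases N) auto
  define x where "x = X * inverse Y"
  define z where "z = Z * inverse Y"
  have YiY: "Y * inverse Y = 1" using inverse_mult_eq_1'[OF Y0] .
  have Xx: "X = Y * x" unfolding x_def using YiY by (metis mult.commute mult.left_commute mult_1_right)
  have Zz: "Z = Y * z" unfolding z_def using YiY by (metis mult.commute mult.left_commute mult_1_right)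
  have z0: "z $ 0 = 0" using Z0 by (simp add: z_def)
  have Yn0: "Y \<noteq> 0" using Y0 by auto
  define E where "E = fps_const a * x ^ N + fps_const b * x ^ N * z ^ N + fps_const c * z ^ N - z ^ (N + N)"
  have "curve_F a b c N N X Y Z = Y ^ (N + N) * E"
    unfolding curve_F_def E_def Xx Zz by (simp add: algebra_simps power_mult_distrib power_add)
  hence E0: "E = 0" using cF Yn0 by simp
  have zn0: "z \<noteq> 0"
  proof
    assume "z = 0"
    hence "fps_const a * x ^ N = 0" using E0 Npos by (simp add: E_def power_0_left)
    hence "x = 0" using a by simp
    hence "constant_point (X, Y, Z)" unfolding constant_point_def using Y0 Xx Zz \<open>z = 0\<close>
      by (simp only: prod.case) (intro exI[of _ Y] exI[of _ 0] exI[of _ 1]; simp)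
    with nc show False by simp
  qed
  define U where "U = fps_const a + fps_const b * z ^ N"
  have U0: "U $ 0 \<noteq> 0" using a z0 Npos by (simp add: U_def fps_nth_power_0 power_0_left)
  have key: "x ^ N * U = z ^ N * (z ^ N - fps_const c)"
    using E0 unfolding E_def U_def by (simp add: algebra_simps power_add)
  have V0: "(z ^ N - fps_const c) $ 0 \<noteq> 0" using c z0 Npos by (simp add: fps_nth_power_0 power_0_left)
  have rhs0: "z ^ N * (z ^ N - fps_const c) \<noteq> 0" using zn0 V0 by auto
  hence xn0: "x \<noteq> 0" using key Npos by (auto simp: power_0_left)
  have Un0: "U \<noteq> 0" using U0 by auto
  have Vn0: "z ^ N - fps_const c \<noteq> 0" using V0 by auto
  have "subdegree (x ^ N * U) = N * subdegree x"
    using xn0 Un0 by (simp add: subdegree_mult subdegree_power subdegree_eq_0[OF U0])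
  moreover have "subdegree (z ^ N * (z ^ N - fps_const c)) = N * subdegree z"
    using zn0 Vn0 by (simp add: subdegree_mult subdegree_power subdegree_eq_0[OF V0] del: subdegree_minus_commute)
  ultimately have "N * subdegree x = N * subdegree z" using key by metis
  hence sd: "subdegree z \<le> subdegree x" using Npos by simp
  obtain T where xT: "x = z * T" using subdegree_le_imp_dvd_left_divring[OF zn0 sd] by blast
  have "z ^ N * (T ^ N * U) = z ^ N * (z ^ N - fps_const c)"
    using key unfolding xT by (simp add: power_mult_distrib mult_ac)
  hence TU: "T ^ N * U = z ^ N - fps_const c" using zn0 by simp
  hence TN: "T ^ N = (z ^ N - fps_const c) * inverse U"
    using inverse_mult_eq_1'[OF U0] by (metis mult.assoc mult_1_right)
  define l where "l = T $ 0"
  have "(T ^ N * U) $ 0 = (z ^ N - fps_const c) $ 0" using TU by simp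
  hence "l ^ N * a = - c" using z0 Npos by (simp add: l_def U_def fps_nth_power_0 power_0_left)
  hence leq: "a * l ^ N + c = 0" by (simp add: algebra_simps)
  have XT: "X = Z * T" using Xx Zz xT by (simp add: mult_ac)
  have Zn0: "Z \<noteq> 0" using Zz Yn0 zn0 by simp
  have lab: "X $ subdegree Z / Z $ subdegree Z = l"
    unfolding l_def by (rule label_lemma[OF XT Zn0])
  show "a * (X $ subdegree Z / Z $ subdegree Z) ^ N + c = 0" using leq lab by simp
  let ?\<Psi> = "froot N (WB a b c N) l"
  have Wz: "WB a b c N oo z = (z ^ N - fps_const c) * inverse U"
  proof -
    have D0: "(fps_const a + fps_const b * fps_X ^ N :: 'a fps) $ 0 \<noteq> 0" using a Npos by simp
    have p: "fps_X ^ N oo z = z ^ N" using fps_compose_power[OF z0, of fps_X N] z0 by simp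
    show ?thesis unfolding WB_def fps_compose_mult_distrib[OF z0] fps_inverse_compose[OF z0 D0]
      fps_compose_add_distrib fps_compose_sub_distrib fps_const_mult_apply_left[symmetric] p U_def
      by simp
  qed
  have "(?\<Psi> oo z) ^ N = ?\<Psi> ^ N oo z" by (rule fps_compose_power[OF z0])
  also have "\<dots> = T ^ N" using stdB_props(1)[OF leq a c N] Wz TN by simp
  finally have "(?\<Psi> oo z) ^ N = T ^ N" .
  moreover have "(?\<Psi> oo z) $ 0 = T $ 0" using stdB_props(2)[OF leq a c N] by (simp add: l_def)
  moreover have "T $ 0 \<noteq> 0" using leq c Npos unfolding l_def[symmetric] by (auto simp: power_0_left)
  ultimately have TP: "T = ?\<Psi> oo z" using fps_root_unique N by metis
  have "(X, Y, Z) = scale_reparam Y z (stdB a b c N l)"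
    unfolding scale_reparam_def stdB_def using z0
    by (simp add: fps_compose_mult_distrib Xx Zz xT TP mult_ac)
  thus "\<exists>\<rho> \<sigma>. \<rho> $ 0 \<noteq> 0 \<and> \<sigma> $ 0 = 0 \<and>
        (X, Y, Z) = scale_reparam \<rho> \<sigma> (stdB a b c N (X $ subdegree Z / Z $ subdegree Z))"
    using Y0 z0 lab by blast
qed


datatype 'a lab = Aff 'a 'a | IY 'a | IX 'a

definition Lab :: "'a::field triple \<Rightarrow> 'a lab" where
  "Lab r = (case r of (X, Y, Z) \<Rightarrow>
     if Z $ 0 \<noteq> 0 then Aff (X $ 0 / Z $ 0) (Y $ 0 / Z $ 0)
     else if Y $ 0 \<noteq> 0 then IY (X $ subdegree Z / Z $ subdegree Z)
     else IX (Y $ subdegree Z / Z $ subdegree Z))"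

definition stdL :: "'a::field \<Rightarrow> 'a \<Rightarrow> 'a \<Rightarrow> nat \<Rightarrow> 'a lab \<Rightarrow> 'a triple" where
  "stdL a b c N l = (case l of
      Aff x y \<Rightarrow> (if y \<noteq> 0 then stdA a b c N x y else sw (stdA a c b N y x))
    | IY t \<Rightarrow> stdB a b c N t
    | IX t \<Rightarrow> sw (stdB a c b N t))"

definition Labels :: "'a::field \<Rightarrow> 'a \<Rightarrow> 'a \<Rightarrow> nat \<Rightarrow> 'a lab set" where
  "Labels a b c N = {Aff x y | x y. onC a b c N x y} \<union> IY ` {t. a * t ^ N + c = 0}
     \<union> IX ` {t. a * t ^ N + b = 0}"

lemma onC_swap: "onC a c b N y x = onC a b c N x y"
  unfolding onC_def by (simp add: algebra_simps)

lemma constant_point_swap: "constant_point (Y, X, Z) = constant_point (X, Y, Z)"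
  unfolding constant_point_def by auto

context
  fixes a b c :: "'a::field" and N :: nat
  assumes a: "a \<noteq> 0" and b: "b \<noteq> 0" and c: "c \<noteq> 0" and abc: "a + b * c \<noteq> 0"
    and N: "of_nat N \<noteq> (0::'a)"
begin

lemma Npos: "N > 0" using N by (cases N) auto

lemma acb: "a + c * b \<noteq> 0" using abc by (simp add: mult.commute)

lemma onC_nz: "onC a b c N x y \<Longrightarrow> x \<noteq> 0 \<or> y \<noteq> 0"
  using Npos by (auto simp: onC_def power_0_left)

lemma M1:
  assumes br: "branch_rep (curve_F a b c N N) r"
  shows "Lab r \<in> Labels a b c N \<and>
    (\<exists>\<rho> \<sigma>. \<rho> $ 0 \<noteq> 0 \<and> \<sigma> $ 0 = 0 \<and> r = scale_reparam \<rho> \<sigma> (stdL a b c N (Lab r)))"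
proof -
  obtain X Y Z where r: "r = (X, Y, Z)" by (cases r)
  have cF: "curve_F a b c N N X Y Z = 0" and nc: "\<not> constant_point (X, Y, Z)"
    and nm: "X $ 0 \<noteq> 0 \<or> Y $ 0 \<noteq> 0 \<or> Z $ 0 \<noteq> 0"
    using br by (auto simp: r branch_rep_def normalised_triple_def)
  show ?thesis
  proof (cases "Z $ 0 \<noteq> 0")
    case Z0: True
    define x where "x = X * inverse Z"
    define y where "y = Y * inverse Z"
    have ZiZ: "Z * inverse Z = 1" using inverse_mult_eq_1'[OF Z0] .
    have Xx: "X = Z * x" unfolding x_def using ZiZ by (metis mult.commute mult.left_commute mult_1_right)
    have Yy: "Y = Z * y" unfolding y_def using ZiZ by (metis mult.commute mult.left_commute mult_1_right)
    have Zn0: "Z \<noteq> 0" using Z0 by auto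
    have "curve_F a b c N N X Y Z = Z ^ (N + N) *
        (fps_const a * x ^ N * y ^ N + fps_const b * x ^ N + fps_const c * y ^ N - 1)"
      unfolding curve_F_def Xx Yy by (simp add: algebra_simps power_mult_distrib power_add)
    hence eq: "fps_const a * x ^ N * y ^ N + fps_const b * x ^ N + fps_const c * y ^ N = 1"
      using cF Zn0 by simp
    have x0: "x $ 0 = X $ 0 / Z $ 0" and y0: "y $ 0 = Y $ 0 / Z $ 0"
      by (simp_all add: x_def y_def divide_inverse)
    have labr: "Lab r = Aff (x $ 0) (y $ 0)" using Z0 by (simp add: Lab_def r x0 y0)
    show ?thesis
    proof (cases "y $ 0 \<noteq> 0")
      case True
      note A = caseA[OF eq True abc N]
      define \<sigma> where "\<sigma> = x - fps_const (x $ 0)"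
      have s0: "\<sigma> $ 0 = 0" using A(2) by (simp add: \<sigma>_def)
      have e: "r = scale_reparam Z \<sigma> (stdA a b c N (x $ 0) (y $ 0))"
        unfolding r scale_reparam_def stdA_def using s0 A(3)
        by (simp add: fps_compose_add_distrib \<sigma>_def Xx Yy)
      have mem: "Lab r \<in> Labels a b c N" using labr A(1) by (auto simp: Labels_def)
      have sl: "stdL a b c N (Lab r) = stdA a b c N (x $ 0) (y $ 0)"
        using True by (simp add: labr stdL_def)
      show ?thesis unfolding sl using e mem Z0 s0 by blast
    next
      case False
      hence y00: "y $ 0 = 0" by simp
      have eq': "fps_const a * y ^ N * x ^ N + fps_const c * y ^ N + fps_const b * x ^ N = 1"
        using eq by (simp add: algebra_simps)
      have "(fps_const a * x ^ N * y ^ N + fps_const b * x ^ N + fps_const c * y ^ N) $ 0 = 1"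
        using eq by simp
      hence on: "onC a b c N (x $ 0) (y $ 0)" unfolding onC_def by (simp add: fps_nth_power_0)
      have xn0: "x $ 0 \<noteq> 0" using onC_nz[OF on] y00 by simp
      note A = caseA[OF eq' xn0 acb N]
      define \<sigma> where "\<sigma> = y - fps_const (y $ 0)"
      have s0: "\<sigma> $ 0 = 0" using A(2) by (simp add: \<sigma>_def)
      have e: "r = scale_reparam Z \<sigma> (sw (stdA a c b N (y $ 0) (x $ 0)))"
        unfolding r scale_reparam_def stdA_def sw_def using s0 A(3)
        by (simp add: fps_compose_add_distrib \<sigma>_def Xx Yy)
      have mem: "Lab r \<in> Labels a b c N" using labr on by (auto simp: Labels_def)
      have sl: "stdL a b c N (Lab r) = sw (stdA a c b N (y $ 0) (x $ 0))"
        using y00 by (simp add: labr stdL_def)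
      show ?thesis unfolding sl using e mem Z0 s0 by blast
    qed
  next
    case False
    hence Z0: "Z $ 0 = 0" by simp
    show ?thesis
    proof (cases "Y $ 0 \<noteq> 0")
      case True
      note B = caseB[OF cF True Z0 nc a c N]
      have labr: "Lab r = IY (X $ subdegree Z / Z $ subdegree Z)" using Z0 True by (simp add: Lab_def r)
      have sl: "stdL a b c N (Lab r) = stdB a b c N (X $ subdegree Z / Z $ subdegree Z)"
        by (simp add: labr stdL_def)
      have mem: "Lab r \<in> Labels a b c N" using B(1) by (simp add: labr Labels_def)
      show ?thesis unfolding sl using B(2) mem by (simp add: r)
    next
      case False
      hence Y0: "Y $ 0 = 0" by simp
      hence X0: "X $ 0 \<noteq> 0" using nm Z0 by simp
      have cF': "curve_F a c b N N Y X Z = 0" using cF curve_sw[of a c b N Y X Z] by simp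
      have nc': "\<not> constant_point (Y, X, Z)" using nc constant_point_swap by metis
      note B = caseB[OF cF' X0 Z0 nc' a b N]
      have labr: "Lab r = IX (Y $ subdegree Z / Z $ subdegree Z)" using Z0 Y0 by (simp add: Lab_def r)
      from B(2) obtain \<rho> \<sigma> where rs: "\<rho> $ 0 \<noteq> 0" "\<sigma> $ 0 = 0"
        "(Y, X, Z) = scale_reparam \<rho> \<sigma> (stdB a c b N (Y $ subdegree Z / Z $ subdegree Z))" by blast
      have "r = sw (Y, X, Z)" by (simp add: r sw_def)
      also have "\<dots> = scale_reparam \<rho> \<sigma> (sw (stdB a c b N (Y $ subdegree Z / Z $ subdegree Z)))"
        using rs(3) sw_scale by metis
      finally have e: "r = scale_reparam \<rho> \<sigma> (sw (stdB a c b N (Y $ subdegree Z / Z $ subdegree Z)))" .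
      have sl: "stdL a b c N (Lab r) = sw (stdB a c b N (Y $ subdegree Z / Z $ subdegree Z))"
        by (simp add: labr stdL_def)
      have mem: "Lab r \<in> Labels a b c N" using B(1) by (simp add: labr Labels_def)
      show ?thesis unfolding sl using e mem rs by blast
    qed
  qed
qed

end


context
  fixes a b c :: "'a::field" and N :: nat
  assumes a: "a \<noteq> 0" and b: "b \<noteq> 0" and c: "c \<noteq> 0" and abc: "a + b * c \<noteq> 0"
    and N: "of_nat N \<noteq> (0::'a)"
begin

lemma Npos': "N > 0" using N by (cases N) auto

lemma acb': "a + c * b \<noteq> 0" using abc by (simp add: mult.commute)

lemma aff_x_nz: "onC a b c N x 0 \<Longrightarrow> x \<noteq> 0"
  using Npos' by (auto simp: onC_def power_0_left)

lemma M2: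
  assumes "l \<in> Labels a b c N"
  shows "branch_rep (curve_F a b c N N) (stdL a b c N l) \<and> primitive_rep (stdL a b c N l)"
proof -
  consider (A) x y where "l = Aff x y" "onC a b c N x y" | (B) t where "l = IY t" "a * t ^ N + c = 0"
    | (C) t where "l = IX t" "a * t ^ N + b = 0"
    using assms unfolding Labels_def by blast
  thus ?thesis
  proof cases
    case A
    show ?thesis
    proof (cases "y \<noteq> 0")
      case True
      thus ?thesis using stdA_branch[OF A(2) abc True N] by (simp add: A(1) stdL_def)
    next
      case False
      hence y0: "y = 0" by simp
      have on': "onC a c b N y x" using A(2) onC_swap by metis
      have x0: "x \<noteq> 0" using aff_x_nz A(2) y0 by simp
      show ?thesis using stdA_branch[OF on' acb' x0 N] y0
        by (simp add: A(1) stdL_def branch_rep_sw primitive_rep_sw)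
    qed
  next
    case B
    thus ?thesis using stdB_branch[OF B(2) a c N] by (simp add: stdL_def)
  next
    case C
    thus ?thesis using stdB_branch[OF C(2) a b N]
      by (simp add: stdL_def branch_rep_sw primitive_rep_sw)
  qed
qed

lemma M3:
  assumes "l \<in> Labels a b c N" and r0: "\<rho> $ 0 \<noteq> 0" and s0: "\<sigma> $ 0 = 0"
    and nc: "\<not> constant_point (scale_reparam \<rho> \<sigma> (stdL a b c N l))"
  shows "Lab (scale_reparam \<rho> \<sigma> (stdL a b c N l)) = l"
proof -
  have sn0: "\<sigma> \<noteq> 0" using nc scale_zero_const[OF r0] by metis
  have rsn0: "\<rho> * \<sigma> \<noteq> 0" using sn0 r0 by auto
  consider (A) x y where "l = Aff x y" "onC a b c N x y" | (B) t where "l = IY t" "a * t ^ N + c = 0"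
    | (C) t where "l = IX t" "a * t ^ N + b = 0"
    using assms unfolding Labels_def by blast
  thus ?thesis
  proof cases
    case A
    show ?thesis
    proof (cases "y \<noteq> 0")
      case True
      thus ?thesis using stdA_props(2)[OF A(2) abc True N] r0
        by (simp add: A(1) stdL_def stdA_def scale_reparam_def Lab_def)
    next
      case False
      hence y0: "y = 0" by simp
      have on': "onC a c b N y x" using A(2) onC_swap by metis
      have x0: "x \<noteq> 0" using aff_x_nz A(2) y0 by simp
      show ?thesis using stdA_props(2)[OF on' acb' x0 N] r0 y0
        by (simp add: A(1) stdL_def stdA_def scale_reparam_def Lab_def sw_def)
    qed
  next
    case B
    let ?\<Psi> = "froot N (WB a b c N) t"
    have e: "scale_reparam \<rho> \<sigma> (stdL a b c N l) = ((\<rho> * \<sigma>) * (?\<Psi> oo \<sigma>), \<rho>, \<rho> * \<sigma>)"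
      using s0 by (simp add: B(1) stdL_def stdB_def scale_reparam_def fps_compose_mult_distrib mult_ac)
    have "Lab ((\<rho> * \<sigma>) * (?\<Psi> oo \<sigma>), \<rho>, \<rho> * \<sigma>) = IY ((?\<Psi> oo \<sigma>) $ 0)"
      using r0 s0 label_lemma[OF refl rsn0, of "?\<Psi> oo \<sigma>"] by (simp add: Lab_def)
    thus ?thesis using e stdB_props(2)[OF B(2) a c N] B(1) by simp
  next
    case C
    let ?\<Psi> = "froot N (WB a c b N) t"
    have e: "scale_reparam \<rho> \<sigma> (stdL a b c N l) = (\<rho>, (\<rho> * \<sigma>) * (?\<Psi> oo \<sigma>), \<rho> * \<sigma>)"
      using s0 by (simp add: C(1) stdL_def stdB_def sw_def scale_reparam_def fps_compose_mult_distrib mult_ac)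
    have "Lab (\<rho>, (\<rho> * \<sigma>) * (?\<Psi> oo \<sigma>), \<rho> * \<sigma>) = IX ((?\<Psi> oo \<sigma>) $ 0)"
      using r0 s0 label_lemma[OF refl rsn0, of "?\<Psi> oo \<sigma>"] by (simp add: Lab_def)
    thus ?thesis using e stdB_props(2)[OF C(2) a b N] C(1) by simp
  qed
qed

end


lemma prim_s1:
  assumes "primitive_rep r" "r = scale_reparam \<rho> \<sigma> s" "\<rho> $ 0 \<noteq> 0" "\<sigma> $ 0 = 0"
  shows "\<sigma> $ 1 \<noteq> 0"
  using assms unfolding primitive_rep_def by blast

lemma fps_inv_0: "fps_inv (\<sigma> :: 'a::field fps) $ 0 = 0"
  by (simp add: fps_inv_def)

context
  fixes a b c :: "'a::field" and N :: nat
  assumes a: "a \<noteq> 0" and b: "b \<noteq> 0" and c: "c \<noteq> 0" and abc: "a + b * c \<noteq> 0"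
    and N: "of_nat N \<noteq> (0::'a)"
begin

abbreviation "BB \<equiv> {r. branch_rep (curve_F a b c N N) r \<and> primitive_rep r}"

lemma E1:
  assumes r: "r \<in> BB" and r': "r' \<in> BB" and eqv: "rep_equiv r r'"
  shows "Lab r' = Lab r"
proof -
  from eqv obtain \<rho>' \<sigma>' where h: "\<rho>' $ 0 \<noteq> 0" "\<sigma>' $ 0 = 0" "r' = scale_reparam \<rho>' \<sigma>' r"
    unfolding rep_equiv_def by blast
  from M1[OF a b c abc N] r obtain \<rho> \<sigma> where m: "Lab r \<in> Labels a b c N" "\<rho> $ 0 \<noteq> 0" "\<sigma> $ 0 = 0"
    "r = scale_reparam \<rho> \<sigma> (stdL a b c N (Lab r))" by blast
  define S where "S = stdL a b c N (Lab r)"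
  have m4: "r = scale_reparam \<rho> \<sigma> S" using m(4) by (simp add: S_def)
  have e: "r' = scale_reparam (\<rho>' * (\<rho> oo \<sigma>')) (\<sigma> oo \<sigma>') S"
    unfolding h(3) by (subst m4) (rule scale_comp[OF m(3) h(2)])
  have nc: "\<not> constant_point r'" using r' by (simp add: branch_rep_def)
  show ?thesis
    using M3[OF a b c abc N m(1), of "\<rho>' * (\<rho> oo \<sigma>')" "\<sigma> oo \<sigma>'"] e nc h(1) m(2,3)
    unfolding S_def by simp
qed

lemma E2:
  assumes r: "r \<in> BB" and r': "r' \<in> BB" and lab: "Lab r = Lab r'"
  shows "rep_equiv r r'"
proof -
  from M1[OF a b c abc N] r obtain \<rho> \<sigma> where m: "\<rho> $ 0 \<noteq> 0" "\<sigma> $ 0 = 0"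
    "r = scale_reparam \<rho> \<sigma> (stdL a b c N (Lab r))" by blast
  from M1[OF a b c abc N] r' obtain \<rho>' \<sigma>' where m': "\<rho>' $ 0 \<noteq> 0" "\<sigma>' $ 0 = 0"
    "r' = scale_reparam \<rho>' \<sigma>' (stdL a b c N (Lab r'))" by blast
  define S where "S = stdL a b c N (Lab r)"
  have m3: "r = scale_reparam \<rho> \<sigma> S" using m(3) by (simp add: S_def)
  have m'3: "r' = scale_reparam \<rho>' \<sigma>' S" using m'(3) lab by (simp add: S_def)
  have s1: "\<sigma> $ 1 \<noteq> 0" using prim_s1[OF _ m(3) m(1,2)] r by simp
  have s1': "\<sigma>' $ 1 \<noteq> 0" using prim_s1[OF _ m'(3) m'(1,2)] r' by simp
  define \<iota> where "\<iota> = fps_inv \<sigma>"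
  have i0: "\<iota> $ 0 = 0" by (simp add: \<iota>_def fps_inv_0)
  have "(\<iota> oo \<sigma>) $ 1 = 1" using fps_inv[OF m(2) s1] by (simp add: \<iota>_def)
  hence i1: "\<iota> $ 1 \<noteq> 0" using compose_nth1[OF m(2), of \<iota>] by auto
  define \<tau> where "\<tau> = \<iota> oo \<sigma>'"
  have t0: "\<tau> $ 0 = 0" using i0 by (simp add: \<tau>_def)
  have t1: "\<tau> $ 1 \<noteq> 0" using compose_nth1[OF m'(2), of \<iota>] i1 s1' by (simp add: \<tau>_def)
  have st: "\<sigma> oo \<tau> = \<sigma>'"
  proof -
    have "\<sigma> oo \<tau> = (\<sigma> oo \<iota>) oo \<sigma>'" unfolding \<tau>_def by (rule fps_compose_assoc[OF m'(2) i0])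
    also have "\<sigma> oo \<iota> = fps_X" unfolding \<iota>_def by (rule fps_inv_right[OF m(2) s1])
    finally show ?thesis using m'(2) by simp
  qed
  define \<rho>'' where "\<rho>'' = \<rho>' * inverse (\<rho> oo \<tau>)"
  have rt0: "(\<rho> oo \<tau>) $ 0 \<noteq> 0" using m(1) by simp
  have rr: "\<rho>'' * (\<rho> oo \<tau>) = \<rho>'"
    unfolding \<rho>''_def using inverse_mult_eq_1[OF rt0] by (simp add: mult.assoc)
  have r''0: "\<rho>'' $ 0 \<noteq> 0" using m'(1) rt0 by (simp add: \<rho>''_def)
  have "scale_reparam \<rho>'' \<tau> r = scale_reparam (\<rho>'' * (\<rho> oo \<tau>)) (\<sigma> oo \<tau>) S"
    by (subst m3) (rule scale_comp[OF m(2) t0])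
  also have "\<dots> = r'" using rr st m'3 by simp
  finally have "scale_reparam \<rho>'' \<tau> r = r'" .
  thus ?thesis unfolding rep_equiv_def using r''0 t0 t1 by blast
qed

lemma card_branches: "card (rational_branches (curve_F a b c N N)) = card (Labels a b c N)"
proof -
  define F where "F l = {r' \<in> BB. Lab r' = l}" for l
  have cls: "{r' \<in> BB. rep_equiv r r'} = F (Lab r)" if "r \<in> BB" for r
    unfolding F_def using E1 E2 that by blast
  have img: "Lab ` BB = Labels a b c N"
  proof
    show "Lab ` BB \<subseteq> Labels a b c N" using M1[OF a b c abc N] by blast
    show "Labels a b c N \<subseteq> Lab ` BB"
    proof
      fix l assume l: "l \<in> Labels a b c N"
      have s: "stdL a b c N l \<in> BB" using M2[OF a b c abc N l] by simp
      have "Lab (scale_reparam 1 fps_X (stdL a b c N l)) = l"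
        by (rule M3[OF a b c abc N l]) (use s in \<open>auto simp: scale_id branch_rep_def\<close>)
      hence "Lab (stdL a b c N l) = l" by (simp add: scale_id)
      with s show "l \<in> Lab ` BB" by force
    qed
  qed
  have "rational_branches (curve_F a b c N N) = (\<lambda>r. {r' \<in> BB. rep_equiv r r'}) ` BB"
    unfolding rational_branches_def Let_def ..
  also have "\<dots> = (\<lambda>r. F (Lab r)) ` BB"
    by (rule image_cong[OF refl cls])
  also have "\<dots> = F ` (Lab ` BB)" by (simp add: image_image)
  also have "\<dots> = F ` Labels a b c N" using img by simp
  finally have rb: "rational_branches (curve_F a b c N N) = F ` Labels a b c N" .
  have "inj_on F (Labels a b c N)"
  proof (rule inj_onI)
    fix l l' assume l: "l \<in> Labels a b c N" and "l' \<in> Labels a b c N" and e: "F l = F l'"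
    from l img have "l \<in> Lab ` BB" by simp
    then obtain r where r: "r \<in> BB" and rl: "l = Lab r" by (rule imageE)
    have "r \<in> F l" using r rl by (simp add: F_def)
    hence "r \<in> F l'" by (simp only: e)
    thus "l = l'" using rl by (simp add: F_def)
  qed
  thus ?thesis unfolding rb by (rule card_image)
qed

end


lemma fermat_ff:
  fixes x :: "'a::{finite,field}"
  assumes "x \<noteq> 0"
  shows "x ^ (card (UNIV :: 'a set) - 1) = 1"
proof -
  have fin: "finite (UNIV - {0::'a})" by simp
  have "(\<Prod>y\<in>UNIV-{0}. x * y) = x ^ (card (UNIV :: 'a set) - 1) * \<Prod>(UNIV-{0::'a})"
    by (simp add: prod.distrib card_Diff_singleton)
  also have "(\<Prod>y\<in>UNIV-{0}. x * y) = (\<Prod>y\<in>UNIV-{0::'a}. y)"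
    by (rule prod.reindex_bij_witness[of _ "\<lambda>y. y / x" "\<lambda>y. x * y"]) (use assms in auto)
  finally have "\<Prod>(UNIV-{0::'a}) * 1 = \<Prod>(UNIV-{0::'a}) * x ^ (card (UNIV :: 'a set) - 1)"
    by (simp add: mult.commute)
  moreover have "\<Prod>(UNIV-{0::'a}) \<noteq> 0" by (simp add: prod_zero_iff)
  ultimately show ?thesis by (metis mult_left_cancel)
qed

lemma card_pow_eq_le:
  fixes w :: "'a::field"
  assumes "k > 0"
  shows "card {x. x ^ k = w} \<le> k"
proof -
  define P where "P = monom (1::'a) k + [:-w:]"
  have dP: "degree P = k" using assms unfolding P_def
    by (subst degree_add_eq_left) (simp_all add: degree_monom_eq)
  hence "P \<noteq> 0" using assms by auto
  from card_poly_roots_bound[OF this] have "card {x. poly P x = 0} \<le> k" using dP by simp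
  moreover have "{x. poly P x = 0} = {x. x ^ k = w}" by (simp add: P_def poly_monom add_eq_0_iff2)
  ultimately show ?thesis by simp
qed

lemma char_ff:
  assumes "card (UNIV :: 'a::{finite,field} set) = p ^ h" "prime p" "h > 0"
  shows "CHAR('a) = p"
proof -
  have pos: "CHAR('a) > 0" by (rule finite_imp_CHAR_pos) simp
  hence pr: "prime CHAR('a)" by (rule prime_CHAR_semidom)
  have "CHAR('a) dvd p ^ h" using CHAR_dvd_CARD[where ?'a = 'a] assms(1) by simp
  hence "CHAR('a) dvd p" using pr prime_dvd_power by blast
  thus ?thesis using pr assms(2) by (simp add: primes_dvd_imp_eq)
qed

lemma nat_pow_minus_one_dvd:
  fixes x k :: nat
  assumes "x \<ge> 1"
  shows "(x - 1) dvd (x ^ k - 1)"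
proof -
  have "int x ^ k - 1 = (int x - 1) * (\<Sum>i<k. int x ^ i)" by (rule power_diff_1_eq)
  hence "(int x - 1) dvd (int x ^ k - 1)" by simp
  moreover have "int (x - 1) = int x - 1" "int (x ^ k - 1) = int x ^ k - 1"
    using assms by (auto simp: of_nat_diff)
  ultimately show ?thesis by (metis int_dvd_int_iff)
qed


context
  fixes p h r n :: nat
  assumes p: "prime p" "p > 5" and cardU: "card (UNIV :: 'a::{finite,field} set) = p ^ h"
    and rh: "r < h" "r dvd h" and nd: "n = (p ^ h - 1) div (p ^ r - 1)"
begin

lemma h_pos: "h > 0" using rh by simp
lemma r_pos: "r > 0" using rh by (cases r) auto
lemma p_pos: "p > 0" using p by simp

lemma p7: "p \<ge> 7"
proof (rule ccontr)
  assume "\<not> p \<ge> 7"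
  hence "p = 6" using p(2) by simp
  hence "(2::nat) dvd p" by simp
  hence "2 = (1::nat) \<or> 2 = p" using p(1) unfolding prime_nat_iff by blast
  thus False using \<open>p = 6\<close> by simp
qed

lemma Q_ge: "p ^ r \<ge> 7"
proof -
  have "p ^ r \<ge> p ^ 1" using r_pos p_pos by (intro power_increasing) auto
  thus ?thesis using p7 by simp
qed

lemma n_mul: "n * (p ^ r - 1) = p ^ h - 1"
proof -
  obtain k where k: "h = r * k" using rh by (auto elim: dvdE)
  have "p ^ h = (p ^ r) ^ k" by (simp add: k power_mult)
  hence "(p ^ r - 1) dvd (p ^ h - 1)" using nat_pow_minus_one_dvd[of "p ^ r" k] Q_ge by simp
  thus ?thesis using nd by simp
qed

lemma n_pos: "n > 0"
proof -
  have "p ^ h > 1" using one_less_power[OF prime_gt_1_nat[OF p(1)] h_pos] .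
  thus ?thesis using n_mul by (cases n) auto
qed

lemma CHAR_a: "CHAR('a) = p" by (rule char_ff[OF cardU p(1) h_pos])

lemma of_nat_p: "of_nat p = (0::'a)" by (simp add: of_nat_eq_0_iff_char_dvd CHAR_a)

lemma of_nat_n: "of_nat n = (1::'a)"
proof -
  have z1: "of_nat (p ^ r) = (0::'a)" using of_nat_p r_pos by (simp add: of_nat_power)
  have z2: "of_nat (p ^ h) = (0::'a)" using of_nat_p h_pos by (simp add: of_nat_power)
  have "(of_nat (n * (p ^ r - 1)) :: 'a) = of_nat (p ^ h - 1)" using n_mul by simp
  moreover have "(of_nat (p ^ r - 1) :: 'a) = - 1" using z1 Q_ge by (simp add: of_nat_diff)
  moreover have "(of_nat (p ^ h - 1) :: 'a) = - 1"
    using z2 p_pos by (simp add: of_nat_diff)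
  ultimately show ?thesis by simp
qed

lemma frob_add: "(x + y :: 'a) ^ (p ^ r) = x ^ (p ^ r) + y ^ (p ^ r)"
  by (rule freshmans_dream') (simp_all add: CHAR_a p(1))

lemma frob_minus: "(- x :: 'a) ^ (p ^ r) = - (x ^ (p ^ r))"
proof -
  have "(x + - x) ^ (p ^ r) = x ^ (p ^ r) + (- x) ^ (p ^ r)" by (rule frob_add)
  hence "x ^ (p ^ r) + (- x) ^ (p ^ r) = 0" using p_pos by (simp add: power_0_left)
  hence "- (x ^ (p ^ r)) = (- x) ^ (p ^ r)" by (simp only: neg_eq_iff_add_eq_0)
  thus ?thesis by (rule sym)
qed

lemma frob_diff: "(x - y :: 'a) ^ (p ^ r) = x ^ (p ^ r) - y ^ (p ^ r)"
  using frob_add[of x "- y"] frob_minus[of y] by (simp only: diff_conv_add_uminus)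

definition SS :: "'a set" where "SS = {u. u \<noteq> 0 \<and> u ^ (p ^ r) = u}"

lemma pow_in_SS:
  assumes "x \<noteq> (0::'a)"
  shows "x ^ n \<in> SS"
proof -
  obtain m where m: "p ^ r = Suc m" using Q_ge by (cases "p ^ r") auto
  have e: "n * p ^ r = n * (p ^ r - 1) + n" by (simp add: m)
  have "(x ^ n) ^ (p ^ r) = x ^ (n * (p ^ r - 1) + n)"
    by (simp only: power_mult[symmetric] e)
  also have "\<dots> = x ^ (p ^ h - 1) * x ^ n" by (simp only: n_mul power_add)
  also have "x ^ (p ^ h - 1) = 1" using fermat_ff[OF assms] cardU by simp
  finally show ?thesis using assms by (simp add: SS_def)
qed

lemma SS_card_fib: "card SS = p ^ r - 1 \<and> (\<forall>w\<in>SS. card {x::'a. x ^ n = w} = n)"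
proof -
  define fib where "fib w = {x::'a. x ^ n = w}" for w
  have finS: "finite SS" by simp
  have U: "UNIV - {0::'a} = (\<Union>w\<in>SS. fib w)"
  proof
    show "UNIV - {0::'a} \<subseteq> (\<Union>w\<in>SS. fib w)" using pow_in_SS by (auto simp: fib_def)
    show "(\<Union>w\<in>SS. fib w) \<subseteq> UNIV - {0}" using n_pos by (auto simp: fib_def SS_def power_0_left)
  qed
  have "card (UNIV - {0::'a}) = p ^ h - 1" using cardU by (simp add: card_Diff_singleton)
  moreover have disj: "\<forall>i\<in>SS. \<forall>j\<in>SS. i \<noteq> j \<longrightarrow> fib i \<inter> fib j = {}" by (auto simp: fib_def)
  have "card (\<Union>w\<in>SS. fib w) = (\<Sum>w\<in>SS. card (fib w))"
    by (rule card_UN_disjoint[OF finS _ disj]) simp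
  ultimately have tot: "(\<Sum>w\<in>SS. card (fib w)) = p ^ h - 1" using U by simp
  have le: "\<forall>w\<in>SS. card (fib w) \<le> n" using card_pow_eq_le n_pos by (auto simp: fib_def)
  have "SS \<subseteq> {u. u ^ (p ^ r - 1) = 1}"
  proof
    fix u assume "u \<in> SS"
    hence u: "u \<noteq> 0" "u ^ (p ^ r) = u" by (auto simp: SS_def)
    obtain m where m: "p ^ r = Suc m" using Q_ge by (cases "p ^ r") auto
    have "u * u ^ (p ^ r - 1) = u * 1" using u(2) by (simp add: m)
    thus "u \<in> {u. u ^ (p ^ r - 1) = 1}" using u(1) by simp
  qed
  hence cS: "card SS \<le> p ^ r - 1"
    using card_mono[of "{u::'a. u ^ (p ^ r - 1) = 1}" SS] card_pow_eq_le[of "p ^ r - 1" "1::'a"] Q_ge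
    by simp
  have "(\<Sum>w\<in>SS. card (fib w)) \<le> (\<Sum>w\<in>SS. n)" using le by (intro sum_mono) auto
  hence "p ^ h - 1 \<le> card SS * n" using tot by simp
  moreover have "card SS * n \<le> (p ^ r - 1) * n" using cS by simp
  moreover have "(p ^ r - 1) * n = p ^ h - 1" using n_mul by (simp add: mult.commute)
  ultimately have cSn: "card SS * n = p ^ h - 1" by linarith
  hence "card SS * n = (p ^ r - 1) * n" using n_mul by (simp add: mult.commute)
  hence c1: "card SS = p ^ r - 1" using n_pos by simp
  have "\<forall>w\<in>SS. card (fib w) = n"
  proof (rule ccontr)
    assume "\<not> (\<forall>w\<in>SS. card (fib w) = n)"
    then obtain w where w: "w \<in> SS" "card (fib w) \<noteq> n" by blast
    hence "card (fib w) < n" using le by (simp add: order_less_le)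
    hence "\<exists>w\<in>SS. card (fib w) < n" using w by blast
    hence "(\<Sum>w\<in>SS. card (fib w)) < (\<Sum>w\<in>SS. n)"
      by (rule sum_strict_mono_ex1[OF finS le])
    thus False using tot cSn by simp
  qed
  thus ?thesis using c1 by (simp add: fib_def)
qed

end


context
  fixes p h r n :: nat and a b c :: "'a::{finite,field}"
  assumes p: "prime p" "p > 5" and cardU: "card (UNIV :: 'a set) = p ^ h"
    and rh: "r < h" "r dvd h" and nd: "n = (p ^ h - 1) div (p ^ r - 1)"
    and a: "a \<noteq> 0" and b: "b \<noteq> 0" and c: "c \<noteq> 0" and abc: "a + b * c \<noteq> 0"
    and fa: "a ^ (p ^ r) = a" and fb: "b ^ (p ^ r) = b" and fc: "c ^ (p ^ r) = c"
begin

lemmas ctx = p cardU rh nd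

abbreviation "S \<equiv> SS p r :: 'a set"

lemma n_pos': "n > 0" by (rule n_pos[OF ctx])

lemma S_card: "card S = p ^ r - 1" using SS_card_fib[OF ctx] by simp
lemma S_fib: "w \<in> S \<Longrightarrow> card {x::'a. x ^ n = w} = n" using SS_card_fib[OF ctx] by simp
lemma S_mem: "u \<in> S \<longleftrightarrow> u \<noteq> 0 \<and> u ^ (p ^ r) = u" by (simp add: SS_def[OF ctx])
lemma S_pow: "x \<noteq> 0 \<Longrightarrow> x ^ n \<in> S" by (rule pow_in_SS[OF ctx])

lemma fr_add: "(x + y :: 'a) ^ (p ^ r) = x ^ (p ^ r) + y ^ (p ^ r)" by (rule frob_add[OF ctx])
lemma fr_minus: "(- x :: 'a) ^ (p ^ r) = - (x ^ (p ^ r))" by (rule frob_minus[OF ctx])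
lemma fr_diff: "(x - y :: 'a) ^ (p ^ r) = x ^ (p ^ r) - y ^ (p ^ r)" by (rule frob_diff[OF ctx])

lemma Qge: "p ^ r \<ge> 7" by (rule Q_ge[OF ctx])

lemma mem1: "- c / a \<in> S" using a c fa fc by (simp add: S_mem power_divide fr_minus)
lemma mem2: "- b / a \<in> S" using a b fa fb by (simp add: S_mem power_divide fr_minus)
lemma mem3: "1 / c \<in> S" using c fc by (simp add: S_mem power_divide)
lemma mem4: "1 / b \<in> S" using b fb by (simp add: S_mem power_divide)

lemma cardT1: "card {t::'a. a * t ^ n + c = 0} = n"
proof -
  have "{t::'a. a * t ^ n + c = 0} = {t. t ^ n = - c / a}"
    using a by (auto simp: field_simps add_eq_0_iff2)
  thus ?thesis using S_fib[OF mem1] by simp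
qed

lemma cardT2: "card {t::'a. a * t ^ n + b = 0} = n"
proof -
  have "{t::'a. a * t ^ n + b = 0} = {t. t ^ n = - b / a}"
    using a by (auto simp: field_simps add_eq_0_iff2)
  thus ?thesis using S_fib[OF mem2] by simp
qed

definition Qs :: "('a \<times> 'a) set" where
  "Qs = {(u, v). u \<in> S \<and> v \<in> S \<and> a * u * v + b * u + c * v = 1}"

lemma distinct_pts: "- b / a \<noteq> 1 / c"
proof
  assume "- b / a = 1 / c"
  hence "- b * c = a" using a c by (simp add: field_simps)
  with abc show False by (metis ab_left_minus add.commute mult_minus_left)
qed

lemma card_Qs: "card Qs = p ^ r - 3"
proof -
  define f where "f v = ((1 - c * v) / (a * v + b), v)" for v
  have "Qs = f ` (S - {- b / a, 1 / c})"
  proof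
    show "Qs \<subseteq> f ` (S - {- b / a, 1 / c})"
    proof
      fix uv assume "uv \<in> Qs"
      then obtain u v where uv: "uv = (u, v)" "u \<in> S" "v \<in> S" "a * u * v + b * u + c * v = 1"
        by (auto simp: Qs_def)
      have u0: "u \<noteq> 0" using uv(2) by (simp add: S_mem)
      have e: "u * (a * v + b) = 1 - c * v" using uv(4) by (simp add: algebra_simps)
      have d: "a * v + b \<noteq> 0"
      proof
        assume "a * v + b = 0"
        hence "c * v = 1" "v = - b / a" using e a by (auto simp: field_simps add_eq_0_iff2)
        hence "- b / a = 1 / c" using c by (simp add: field_simps)
        thus False using distinct_pts by simp
      qed
      have v1: "v \<noteq> - b / a" using d a by (auto simp: field_simps)
      have v2: "v \<noteq> 1 / c"
      proof
        assume "v = 1 / c"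
        hence "u * (a * v + b) = 0" using e c by simp
        thus False using u0 d by simp
      qed
      have "u = (1 - c * v) / (a * v + b)" using e d by (simp add: field_simps)
      thus "uv \<in> f ` (S - {- b / a, 1 / c})" using uv v1 v2 by (auto simp: f_def)
    qed
    show "f ` (S - {- b / a, 1 / c}) \<subseteq> Qs"
    proof
      fix uv assume "uv \<in> f ` (S - {- b / a, 1 / c})"
      then obtain v where v: "v \<in> S" "v \<noteq> - b / a" "v \<noteq> 1 / c" "uv = f v" by auto
      have v0: "v \<noteq> 0" "v ^ (p ^ r) = v" using v(1) by (auto simp: S_mem)
      have d: "a * v + b \<noteq> 0" using v(2) a by (auto simp: field_simps add_eq_0_iff2)
      have n1: "1 - c * v \<noteq> 0" using v(3) c by (auto simp: field_simps)
      define u where "u = (1 - c * v) / (a * v + b)"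
      have "u ^ (p ^ r) = (1 - c * v) ^ (p ^ r) / (a * v + b) ^ (p ^ r)" by (simp add: u_def power_divide)
      also have "\<dots> = u" using fa fb fc v0 by (simp add: fr_diff fr_add power_mult_distrib u_def)
      finally have uS: "u \<in> S" using d n1 by (simp add: S_mem u_def)
      have "a * u * v + b * u + c * v = u * (a * v + b) + c * v" by (simp add: algebra_simps)
      also have "\<dots> = 1" using d by (simp add: u_def)
      finally show "uv \<in> Qs" using uS v(1) v(4) by (simp add: Qs_def f_def u_def)
    qed
  qed
  moreover have "inj_on f (S - {- b / a, 1 / c})" by (rule inj_onI) (simp add: f_def)
  ultimately have "card Qs = card (S - {- b / a, 1 / c})" by (simp add: card_image)
  also have "\<dots> = card S - 2" using mem2 mem3 distinct_pts
    by (simp add: card_Diff_subset)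
  finally show ?thesis using S_card by simp
qed

end


context
  fixes p h r n :: nat and a b c :: "'a::{finite,field}"
  assumes p: "prime p" "p > 5" and cardU: "card (UNIV :: 'a set) = p ^ h"
    and rh: "r < h" "r dvd h" and nd: "n = (p ^ h - 1) div (p ^ r - 1)"
    and a: "a \<noteq> 0" and b: "b \<noteq> 0" and c: "c \<noteq> 0" and abc: "a + b * c \<noteq> 0"
    and fa: "a ^ (p ^ r) = a" and fb: "b ^ (p ^ r) = b" and fc: "c ^ (p ^ r) = c"
begin

lemmas ctx2 = p cardU rh nd a b c abc fa fb fc

lemma card_P2:
  "card {(x, y). onC a b c n x y \<and> x \<noteq> 0 \<and> y \<noteq> 0} = (p ^ r - 3) * (n * n)"
proof -
  define fib where "fib w = {x::'a. x ^ n = w}" for w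
  define G where "G uv = fib (fst uv) \<times> fib (snd uv)" for uv
  have eq: "{(x, y). onC a b c n x y \<and> x \<noteq> 0 \<and> y \<noteq> 0} = (\<Union>uv\<in>Qs p r a b c. G uv)"
  proof
    show "{(x, y). onC a b c n x y \<and> x \<noteq> 0 \<and> y \<noteq> 0} \<subseteq> (\<Union>uv\<in>Qs p r a b c. G uv)"
    proof clarify
      fix x y assume h: "onC a b c n x y" "x \<noteq> 0" "y \<noteq> 0"
      have "(x ^ n, y ^ n) \<in> Qs p r a b c"
        using S_pow[OF ctx2 h(2)] S_pow[OF ctx2 h(3)] h(1)
        by (simp add: Qs_def[OF ctx2] onC_def power_mult_distrib mult.assoc)
      moreover have "(x, y) \<in> G (x ^ n, y ^ n)" by (simp add: G_def fib_def)
      ultimately show "(x, y) \<in> (\<Union>uv\<in>Qs p r a b c. G uv)" by blast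
    qed
    show "(\<Union>uv\<in>Qs p r a b c. G uv) \<subseteq> {(x, y). onC a b c n x y \<and> x \<noteq> 0 \<and> y \<noteq> 0}"
    proof clarify
      fix u v x y assume q: "(u, v) \<in> Qs p r a b c" and g: "(x, y) \<in> G (u, v)"
      have uv: "u \<in> SS p r" "v \<in> SS p r" "a * u * v + b * u + c * v = 1"
        using q by (auto simp: Qs_def[OF ctx2])
      have xy: "x ^ n = u" "y ^ n = v" using g by (auto simp: G_def fib_def)
      have "u \<noteq> 0" "v \<noteq> 0" using uv by (auto simp: S_mem[OF ctx2])
      hence "x \<noteq> 0" "y \<noteq> 0" using xy n_pos'[OF ctx2] by (auto simp: power_0_left)
      moreover have "onC a b c n x y" using uv(3) xy by (simp add: onC_def power_mult_distrib mult.assoc)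
      ultimately show "onC a b c n x y \<and> x \<noteq> 0 \<and> y \<noteq> 0" by simp
    qed
  qed
  have disj: "\<forall>i\<in>Qs p r a b c. \<forall>j\<in>Qs p r a b c. i \<noteq> j \<longrightarrow> G i \<inter> G j = {}"
    by (auto simp: G_def fib_def prod_eq_iff)
  have "card (\<Union>uv\<in>Qs p r a b c. G uv) = (\<Sum>uv\<in>Qs p r a b c. card (G uv))"
    by (rule card_UN_disjoint[OF _ _ disj]) simp_all
  also have "\<dots> = (\<Sum>uv\<in>Qs p r a b c. n * n)"
  proof (rule sum.cong[OF refl])
    fix uv assume "uv \<in> Qs p r a b c"
    hence "fst uv \<in> SS p r" "snd uv \<in> SS p r" by (auto simp: Qs_def[OF ctx2])
    thus "card (G uv) = n * n"
      using S_fib[OF ctx2] by (simp add: G_def fib_def card_cartesian_product)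
  qed
  also have "\<dots> = (p ^ r - 3) * (n * n)" using card_Qs[OF ctx2] by simp
  finally show ?thesis using eq by simp
qed

lemma card_P:
  "card {(x, y). onC a b c n x y} = (p ^ r - 3) * (n * n) + 2 * n"
proof -
  have np: "n > 0" by (rule n_pos'[OF ctx2])
  define P0 where "P0 = {(x, y). onC a b c n x y \<and> x = 0}"
  define P1 where "P1 = {(x, y). onC a b c n x y \<and> y = 0}"
  define P2 where "P2 = {(x, y). onC a b c n x y \<and> x \<noteq> 0 \<and> y \<noteq> 0}"
  have U: "{(x, y). onC a b c n x y} = P0 \<union> P1 \<union> P2" by (auto simp: P0_def P1_def P2_def)
  have d1: "P0 \<inter> P1 = {}" using np by (auto simp: P0_def P1_def onC_def power_0_left)
  have d2: "(P0 \<union> P1) \<inter> P2 = {}" by (auto simp: P0_def P1_def P2_def)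
  have "P0 = (\<lambda>y. (0, y)) ` {y. y ^ n = 1 / c}"
    using np c by (auto simp: P0_def onC_def power_0_left field_simps)
  hence c0: "card P0 = n" using S_fib[OF ctx2 mem3[OF ctx2]] by (simp add: card_image inj_on_def)
  have "P1 = (\<lambda>x. (x, 0)) ` {x. x ^ n = 1 / b}"
    using np b by (auto simp: P1_def onC_def power_0_left field_simps)
  hence c1: "card P1 = n" using S_fib[OF ctx2 mem4[OF ctx2]] by (simp add: card_image inj_on_def)
  have c2: "card P2 = (p ^ r - 3) * (n * n)" unfolding P2_def by (rule card_P2)
  have "card {(x, y). onC a b c n x y} = card (P0 \<union> P1) + card P2"
    unfolding U by (rule card_Un_disjoint[OF _ _ d2]) simp_all
  also have "card (P0 \<union> P1) = card P0 + card P1" by (rule card_Un_disjoint[OF _ _ d1]) simp_all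
  finally show ?thesis using c0 c1 c2 by simp
qed

lemma card_Labels: "card (Labels a b c n) = n ^ 2 * (p ^ r - 3) + 4 * n"
proof -
  define A where "A = {Aff x y | x y. onC a b c n x y}"
  define B1 where "B1 = IY ` {t. a * t ^ n + c = 0}"
  define B2 where "B2 = IX ` {t. a * t ^ n + b = 0}"
  have AP: "A = (\<lambda>(x, y). Aff x y) ` {(x, y). onC a b c n x y}" by (auto simp: A_def)
  have inj: "inj_on (\<lambda>(x, y). Aff x y) {(x, y). onC a b c n x y}" by (auto simp: inj_on_def)
  have cA: "card A = (p ^ r - 3) * (n * n) + 2 * n"
    unfolding AP card_image[OF inj] by (rule card_P)
  have cB1: "card B1 = n" unfolding B1_def
    by (subst card_image) (simp_all add: inj_on_def cardT1[OF ctx2])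
  have cB2: "card B2 = n" unfolding B2_def
    by (subst card_image) (simp_all add: inj_on_def cardT2[OF ctx2])
  have fA: "finite A" unfolding AP by simp
  have fB1: "finite B1" "finite B2" unfolding B1_def B2_def by simp_all
  have "Labels a b c n = A \<union> B1 \<union> B2" by (simp add: Labels_def A_def B1_def B2_def)
  moreover have "card (A \<union> B1 \<union> B2) = card A + card B1 + card B2"
  proof -
    have "card (A \<union> B1 \<union> B2) = card (A \<union> B1) + card B2"
      by (rule card_Un_disjoint) (use fA fB1 in \<open>auto simp: A_def B1_def B2_def\<close>)
    also have "card (A \<union> B1) = card A + card B1"
      by (rule card_Un_disjoint) (use fA fB1 in \<open>auto simp: A_def B1_def\<close>)
    finally show ?thesis .
  qed
  ultimately show ?thesis using cA cB1 cB2 by (simp add: power2_eq_square algebra_simps)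
qed

end


theorem proposition4p14:
  fixes a b c :: "'a::{finite,field}" and p h r n m :: nat
  assumes "prime p" and "p > 5"
    and "card (UNIV :: 'a set) = p ^ h"
    and "a \<noteq> 0" and "b \<noteq> 0" and "c \<noteq> 0" and "c \<noteq> - (a / b)"
    and "r < h" and "r dvd h"
    and "n = (p ^ h - 1) div (p ^ r - 1)" and "m = n"
    and "a ^ (p ^ r) = a" and "b ^ (p ^ r) = b" and "c ^ (p ^ r) = c"
  shows "Nq (curve_F a b c n m) = n ^ 2 * (p ^ r - 3) + 4 * n"
proof -
  have abc: "a + b * c \<noteq> 0"
  proof
    assume "a + b * c = 0"
    hence "c = - (a / b)" using assms(5) by (simp add: field_simps add_eq_0_iff2)
    with assms(7) show False by simp
  qed
  have N: "of_nat n \<noteq> (0::'a)"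
    using of_nat_n[OF assms(1,2,3,8,9,10)] by simp
  have "Nq (curve_F a b c n m) = card (rational_branches (curve_F a b c n n))"
    using assms(11) by (simp add: Nq_def)
  also have "\<dots> = card (Labels a b c n)"
    by (rule card_branches[OF assms(4,5,6) abc N])
  also have "\<dots> = n ^ 2 * (p ^ r - 3) + 4 * n"
    by (rule card_Labels[OF assms(1,2,3,8,9,10,4,5,6) abc assms(12,13,14)])
  finally show ?thesis .
qed

end
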